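(* Consider the Normal Partizan Domination game on the complete bipartite graph $K_{s,t}$ with parts $S$ and $T$, $|S|=s\geq 2$, $|T|=t\geq 2$, each vertex colored $A$, $B$ or $C$. If every vertex of $S\cup T$ has color $A$ (resp. $B$), the value is $\max\{s,t\}$ (resp. $-\max\{s,t\}$). If each of $S$ and $T$ contains (i) at least one vertex of color $C$ or (ii) at least one vertex of color $A$ and at least one vertex of color $B$, then the value is $0$. If every vertex of $S$ has color $A$ (resp. $B$) and every vertex of $T$ has color $B$ (resp. $A$), then the value is $0$.
   Context: Normal Partizan Domination game: a finite graph $G$ has each vertex colored $A$, $B$ or $C$. Alice and Bob alternately select a vertex; Alice may only select vertices colored $A$ or $C$, Bob only vertices colored $B$ or $C$. A vertex $u$ dominates $v$ if $u=v$ or $uv$ is an edge. A vertex may be selected only if it is playable, i.e. it dominates at least one vertex not dominated by the previously selected vertices; the game ends when the selected vertices form a dominating set. Under normal play the player unable to move loses. The game is regarded as a partizan combinatorial game with Alice as Left and Bob as Right, and its value is its value in Conway's combinatorial game theory ($\{X\mid Y\}$ has Left options $X$ and Right options $Y$; $G=H$ iff $G+(-H)$ is a second-player win; integers $n$ are the usual integer games, $0=\{\mid\}$). *)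

theory Defs
  imports Main "HOL-Library.FSet"
begin

datatype game = Game (lopts: "game fset") (ropts: "game fset")

primrec neg :: "game \<Rightarrow> game" where
  "neg (Game L R) = Game (neg |`| R) (neg |`| L)"

lemma size_lopt: "x |\<in>| L \<Longrightarrow> size x < size (Game L R)"
proof -
  assume "x |\<in>| L"
  hence "Suc (size x) \<le> (\<Sum>y\<in>fset L. Suc (size y))"
    using member_le_sum[of x "fset L" "\<lambda>y. Suc (size y)"] by simp
  thus ?thesis by (simp only: game.size size_fset_simps)
qed

lemma size_ropt: "x |\<in>| R \<Longrightarrow> size x < size (Game L R)"
proof -
  assume "x |\<in>| R"
  hence "Suc (size x) \<le> (\<Sum>y\<in>fset R. Suc (size y))"
    using member_le_sum[of x "fset R" "\<lambda>y. Suc (size y)"] by simp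
  thus ?thesis by (simp only: game.size size_fset_simps)
qed

function add :: "game \<Rightarrow> game \<Rightarrow> game" where
  "add (Game L R) (Game L' R') =
     Game ((\<lambda>x. add x (Game L' R')) |`| L |\<union>| (\<lambda>y. add (Game L R) y) |`| L')
          ((\<lambda>x. add x (Game L' R')) |`| R |\<union>| (\<lambda>y. add (Game L R) y) |`| R')"
  by pat_completeness auto
termination
  by (relation "measure (\<lambda>(x,y). size x + size y)")
     (auto dest: size_lopt[of _ _ R for R] size_ropt[of _ _ L for L])

text \<open>Normal play: \<open>wins True G\<close> means Left, moving first in G, has a winning strategy;
  \<open>wins False G\<close> means Right, moving first in G, has a winning strategy.\<close>
function wins :: "bool \<Rightarrow> game \<Rightarrow> bool" where
  "wins True (Game L R) = (\<exists>g\<in>fset L. \<not> wins False g)"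
| "wins False (Game L R) = (\<exists>g\<in>fset R. \<not> wins True g)"
  by pat_completeness auto
termination
  by (relation "measure (\<lambda>(b, g). size g)") (auto dest: size_lopt size_ropt)

definition second_player_win :: "game \<Rightarrow> bool" where
  "second_player_win G \<longleftrightarrow> \<not> wins True G \<and> \<not> wins False G"

definition game_eq :: "game \<Rightarrow> game \<Rightarrow> bool" where
  "game_eq G H \<longleftrightarrow> second_player_win (add G (neg H))"

primrec nat_game :: "nat \<Rightarrow> game" where
  "nat_game 0 = Game {||} {||}"
| "nat_game (Suc n) = Game {|nat_game n|} {||}"

definition int_game :: "int \<Rightarrow> game" where
  "int_game n = (if 0 \<le> n then nat_game (nat n) else neg (nat_game (nat (- n))))"

datatype color = ColA | ColB | ColC

definition dominates :: "('v \<Rightarrow> 'v \<Rightarrow> bool) \<Rightarrow> 'v \<Rightarrow> 'v \<Rightarrow> bool" where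
  "dominates E u v \<longleftrightarrow> u = v \<or> E u v"

text \<open>D is the set of vertices dominated by the previously selected vertices.\<close>
definition playable :: "'v fset \<Rightarrow> ('v \<Rightarrow> 'v \<Rightarrow> bool) \<Rightarrow> 'v set \<Rightarrow> 'v \<Rightarrow> bool" where
  "playable V E D v \<longleftrightarrow> v |\<in>| V \<and> (\<exists>u. u |\<in>| V \<and> dominates E v u \<and> u \<notin> D)"

definition alice_may :: "color \<Rightarrow> bool" where
  "alice_may c \<longleftrightarrow> c = ColA \<or> c = ColC"

definition bob_may :: "color \<Rightarrow> bool" where
  "bob_may c \<longleftrightarrow> c = ColB \<or> c = ColC"

lemma dom_pos_dec:
  assumes "playable V E D v"
  shows "card (fset V - (D \<union> {u. u |\<in>| V \<and> dominates E v u})) < card (fset V - D)"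
proof -
  obtain u where u: "u |\<in>| V" "dominates E v u" "u \<notin> D"
    using assms by (auto simp: playable_def)
  have "fset V - (D \<union> {u. u |\<in>| V \<and> dominates E v u}) \<subset> fset V - D"
    using u by auto
  thus ?thesis by (rule psubset_card_mono[rotated]) simp
qed

function dom_pos :: "'v fset \<Rightarrow> ('v \<Rightarrow> 'v \<Rightarrow> bool) \<Rightarrow> ('v \<Rightarrow> color) \<Rightarrow> 'v set \<Rightarrow> game" where
  "dom_pos V E col D =
     Game ((\<lambda>v. dom_pos V E col (D \<union> {u. u |\<in>| V \<and> dominates E v u}))
             |`| ffilter (\<lambda>v. alice_may (col v) \<and> playable V E D v) V)
          ((\<lambda>v. dom_pos V E col (D \<union> {u. u |\<in>| V \<and> dominates E v u}))
             |`| ffilter (\<lambda>v. bob_may (col v) \<and> playable V E D v) V)"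
  by auto
termination
  by (relation "measure (\<lambda>(V, E, col, D). card (fset V - D))") (auto intro: dom_pos_dec)

definition dom_game :: "'v fset \<Rightarrow> ('v \<Rightarrow> 'v \<Rightarrow> bool) \<Rightarrow> ('v \<Rightarrow> color) \<Rightarrow> game" where
  "dom_game V E col = dom_pos V E col {}"

definition kbip :: "'v fset \<Rightarrow> 'v fset \<Rightarrow> 'v \<Rightarrow> 'v \<Rightarrow> bool" where
  "kbip S T x y \<longleftrightarrow> (x |\<in>| S \<and> y |\<in>| T) \<or> (x |\<in>| T \<and> y |\<in>| S)"

end

theory Submission
  imports Defs
begin

inductive lonly :: "game \<Rightarrow> bool" where
  "(\<And>g. g |\<in>| L \<Longrightarrow> lonly g) \<Longrightarrow> lonly (Game L {||})"

inductive ronly :: "game \<Rightarrow> bool" where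
  "(\<And>g. g |\<in>| R \<Longrightarrow> ronly g) \<Longrightarrow> ronly (Game {||} R)"

fun lp :: "game \<Rightarrow> nat \<Rightarrow> bool" where
  "lp G 0 = True"
| "lp G (Suc n) = (\<exists>g\<in>fset (lopts G). lp g n)"

fun rp :: "game \<Rightarrow> nat \<Rightarrow> bool" where
  "rp G 0 = True"
| "rp G (Suc n) = (\<exists>g\<in>fset (ropts G). rp g n)"

lemma neg_nat_game: "neg (nat_game (Suc n)) = Game {||} {|neg (nat_game n)|}"
  by simp

lemma wins_add_T: "wins True (add (Game L R) H) =
  ((\<exists>g\<in>fset L. \<not> wins False (add g H)) \<or> (\<exists>h\<in>fset (lopts H). \<not> wins False (add (Game L R) h)))"
  by (cases H) auto

lemma wins_add_F: "wins False (add (Game L R) H) =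
  ((\<exists>g\<in>fset R. \<not> wins True (add g H)) \<or> (\<exists>h\<in>fset (ropts H). \<not> wins True (add (Game L R) h)))"
  by (cases H) auto

lemma lopts_neg_nat: "lopts (neg (nat_game n)) = {||}"
  by (cases n) auto
lemma ropts_neg_nat: "ropts (neg (nat_game n)) = (if n = 0 then {||} else {|neg (nat_game (n - 1))|})"
  by (cases n) auto
lemma ropts_nat: "ropts (nat_game n) = {||}"
  by (cases n) auto
lemma lopts_nat: "lopts (nat_game n) = (if n = 0 then {||} else {|nat_game (n - 1)|})"
  by (cases n) auto

lemma lonly_wins:
  assumes "lonly G"
  shows "(\<forall>n. wins True (add G (neg (nat_game n))) = lp G (Suc n)) \<and>
         (\<forall>n. wins False (add G (neg (nat_game n))) = (\<not> lp G n))"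
  using assms
proof (induction G rule: lonly.induct)
  case (1 L)
  have T: "wins True (add (Game L {||}) (neg (nat_game n))) = lp (Game L {||}) (Suc n)" for n
    unfolding wins_add_T lopts_neg_nat using 1(2) by auto
  have F: "wins False (add (Game L {||}) (neg (nat_game n))) = (\<not> lp (Game L {||}) n)" for n
  proof (cases n)
    case 0
    then show ?thesis unfolding wins_add_F ropts_neg_nat by simp
  next
    case (Suc m)
    then show ?thesis unfolding wins_add_F ropts_neg_nat using T[of m] by simp
  qed
  show ?case using T F by blast
qed

lemma ronly_wins:
  assumes "ronly G"
  shows "(\<forall>n. wins False (add G (nat_game n)) = rp G (Suc n)) \<and>
         (\<forall>n. wins True (add G (nat_game n)) = (\<not> rp G n))"
  using assms
proof (induction G rule: ronly.induct)
  case (1 R)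
  have T: "wins False (add (Game {||} R) (nat_game n)) = rp (Game {||} R) (Suc n)" for n
    unfolding wins_add_F ropts_nat using 1(2) by auto
  have F: "wins True (add (Game {||} R) (nat_game n)) = (\<not> rp (Game {||} R) n)" for n
  proof (cases n)
    case 0
    then show ?thesis unfolding wins_add_T lopts_nat by simp
  next
    case (Suc m)
    then show ?thesis unfolding wins_add_T lopts_nat using T[of m] by simp
  qed
  show ?case using T F by blast
qed


declare dom_pos.simps[simp del]

fun chain :: "'v fset \<Rightarrow> ('v \<Rightarrow> 'v \<Rightarrow> bool) \<Rightarrow> 'v set \<Rightarrow> nat \<Rightarrow> bool" where
  "chain V E D 0 = True"
| "chain V E D (Suc m) = (\<exists>v. playable V E D v \<and> chain V E (D \<union> {u. u |\<in>| V \<and> dominates E v u}) m)"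

lemma lonly_dom:
  assumes "\<forall>v\<in>fset V. col v = ColA"
  shows "lonly (dom_pos V E col D)"
  using assms
proof (induction V E col D rule: dom_pos.induct)
  case (1 V E col D)
  have e: "ffilter (\<lambda>v. bob_may (col v) \<and> playable V E D v) V = {||}"
    using 1(3) by (auto simp: bob_may_def)
  show ?case
    apply (subst dom_pos.simps)
    unfolding e fimage_fempty
    apply (rule lonly.intros)
    using 1(1,3) by auto
qed


lemma ronly_dom:
  assumes "\<forall>v\<in>fset V. col v = ColB"
  shows "ronly (dom_pos V E col D)"
  using assms
proof (induction V E col D rule: dom_pos.induct)
  case (1 V E col D)
  have e: "ffilter (\<lambda>v. alice_may (col v) \<and> playable V E D v) V = {||}"
    using 1(3) by (auto simp: alice_may_def)
  show ?case
    apply (subst dom_pos.simps)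
    unfolding e fimage_fempty
    apply (rule ronly.intros)
    using 1(2,3) by auto
qed

lemma lp_dom:
  assumes "\<forall>v\<in>fset V. col v = ColA"
  shows "lp (dom_pos V E col D) m = chain V E D m"
proof (induction m arbitrary: D)
  case 0
  then show ?case by simp
next
  case (Suc m)
  show ?case
    apply (subst dom_pos.simps)
    using Suc assms by (auto simp: alice_may_def playable_def)
qed

lemma rp_dom:
  assumes "\<forall>v\<in>fset V. col v = ColB"
  shows "rp (dom_pos V E col D) m = chain V E D m"
proof (induction m arbitrary: D)
  case 0
  then show ?case by simp
next
  case (Suc m)
  show ?case
    apply (subst dom_pos.simps)
    using Suc assms by (auto simp: bob_may_def playable_def)
qed

lemma chain_bound: "chain V E D m \<Longrightarrow> m \<le> card (fset V - D)"
proof (induction m arbitrary: D)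
  case 0
  then show ?case by simp
next
  case (Suc m)
  then obtain v where v: "playable V E D v" "chain V E (D \<union> {u. u |\<in>| V \<and> dominates E v u}) m"
    by auto
  show ?case using Suc.IH[OF v(2)] dom_pos_dec[OF v(1)] by linarith
qed


lemma chain_mono: "chain V E D m \<Longrightarrow> k \<le> m \<Longrightarrow> chain V E D k"
proof (induction m arbitrary: D k)
  case 0
  then show ?case by simp
next
  case (Suc m)
  show ?case
  proof (cases k)
    case 0
    then show ?thesis by simp
  next
    case (Suc k')
    then show ?thesis using Suc.prems Suc.IH by fastforce
  qed
qed

lemma kbip_sym: "kbip T S = kbip S T"
  by (auto simp: kbip_def fun_eq_iff)

lemma nbhd_S:
  assumes "S |\<inter>| T = {||}" "v |\<in>| S"
  shows "{u. u |\<in>| S |\<union>| T \<and> dominates (kbip S T) v u} = insert v (fset T)"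
  using assms by (auto simp: dominates_def kbip_def)

lemma chain_first_S:
  assumes "S |\<inter>| T = {||}" "v |\<in>| S"
    and "chain (S |\<union>| T) (kbip S T) ({} \<union> {u. u |\<in>| S |\<union>| T \<and> dominates (kbip S T) v u}) m"
  shows "Suc m \<le> fcard S"
proof -
  have e: "fset (S |\<union>| T) - insert v (fset T) = fset S - {v}"
    using assms(1) by (auto simp: fset_eq_iff)
  have m: "m \<le> card (fset S - {v})"
    using chain_bound[OF assms(3)] nbhd_S[OF assms(1,2)] e by simp
  have "card (fset S - {v}) = card (fset S) - 1"
    using assms(2) by simp
  moreover have "card (fset S) \<ge> 1"
    using assms(2) by (metis One_nat_def Suc_leI card_gt_0_iff empty_iff finite_fset)
  ultimately show ?thesis using m by (simp add: fcard.rep_eq)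
qed

lemma chain_lower_S:
  assumes "S |\<inter>| T = {||}"
  shows "X \<subseteq> fset S \<Longrightarrow> chain (S |\<union>| T) (kbip S T) (fset T \<union> X) (card (fset S - X))"
proof (induction "card (fset S - X)" arbitrary: X)
  case 0
  then show ?case by (metis chain.simps(1))
next
  case (Suc n)
  have ne: "fset S - X \<noteq> {}" using Suc.hyps(2) by (metis card.empty nat.distinct(1))
  then obtain v where v: "v \<in> fset S - X" by blast
  have d: "fset S - insert v X = (fset S - X) - {v}" by blast
  have c: "card (fset S - insert v X) = n"
    unfolding d using Suc.hyps(2) v by (simp add: card_Diff_singleton)
  have sub: "insert v X \<subseteq> fset S" using Suc.prems v by blast
  have IH: "chain (S |\<union>| T) (kbip S T) (fset T \<union> insert v X) n"
    using Suc.hyps(1)[OF c[symmetric] sub] c by simp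
  have vT: "v \<notin> fset T"
  proof
    assume "v \<in> fset T"
    hence "v |\<in>| S |\<inter>| T" using v by simp
    thus False using assms by simp
  qed
  have pl: "playable (S |\<union>| T) (kbip S T) (fset T \<union> X) v"
    unfolding playable_def dominates_def using v vT by auto
  have eq: "fset T \<union> X \<union> {u. u |\<in>| S |\<union>| T \<and> dominates (kbip S T) v u} = fset T \<union> insert v X"
    using nbhd_S[OF assms, of v] v by auto
  have "chain (S |\<union>| T) (kbip S T) (fset T \<union> X) (Suc n)"
    using pl IH eq by (metis chain.simps(2))
  thus ?case using Suc.hyps(2) by simp
qed

lemma chain_full_S:
  assumes "S |\<inter>| T = {||}" "S \<noteq> {||}"
  shows "chain (S |\<union>| T) (kbip S T) {} (fcard S)"
proof -
  obtain v where v: "v |\<in>| S" using assms(2) by auto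
  have pl: "playable (S |\<union>| T) (kbip S T) {} v"
    using v unfolding playable_def dominates_def by auto
  have c: "chain (S |\<union>| T) (kbip S T) (fset T \<union> {v}) (card (fset S - {v}))"
    using chain_lower_S[OF assms(1), of "{v}"] v by simp
  have "card (fset S) \<ge> 1"
    using v by (metis One_nat_def Suc_leI card_gt_0_iff empty_iff finite_fset)
  hence f: "fcard S = Suc (card (fset S - {v}))"
    using v by (simp add: fcard.rep_eq)
  have eq: "{} \<union> {u. u |\<in>| S |\<union>| T \<and> dominates (kbip S T) v u} = fset T \<union> {v}"
    using nbhd_S[OF assms(1) v] by auto
  show ?thesis unfolding f using pl c eq by (metis chain.simps(2))
qed

lemma chain_start:
  assumes "S |\<inter>| T = {||}" "S \<noteq> {||}" "T \<noteq> {||}"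
  shows "chain (S |\<union>| T) (kbip S T) {} m \<longleftrightarrow> m \<le> max (fcard S) (fcard T)"
proof
  assume c: "chain (S |\<union>| T) (kbip S T) {} m"
  show "m \<le> max (fcard S) (fcard T)"
  proof (cases m)
    case 0
    then show ?thesis by simp
  next
    case (Suc k)
    then obtain v where v: "playable (S |\<union>| T) (kbip S T) {} v"
      "chain (S |\<union>| T) (kbip S T) ({} \<union> {u. u |\<in>| S |\<union>| T \<and> dominates (kbip S T) v u}) k"
      using c by auto
    have "v |\<in>| S \<or> v |\<in>| T" using v(1) by (auto simp: playable_def)
    then show ?thesis
    proof
      assume "v |\<in>| S"
      then show ?thesis using chain_first_S[OF assms(1) _ v(2)] Suc by simp
    next
      assume vT: "v |\<in>| T"
      have a1: "T |\<inter>| S = {||}" using assms(1) by (simp add: finter_commute)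
      have "Suc k \<le> fcard T"
        using chain_first_S[OF a1 vT, of k] v(2) by (simp add: funion_commute kbip_sym)
      then show ?thesis using Suc by simp
    qed
  qed
next
  assume m: "m \<le> max (fcard S) (fcard T)"
  have a1: "T |\<inter>| S = {||}" using assms(1) by (simp add: finter_commute)
  have cS: "chain (S |\<union>| T) (kbip S T) {} (fcard S)" using chain_full_S[OF assms(1,2)] .
  have cT: "chain (S |\<union>| T) (kbip S T) {} (fcard T)"
    using chain_full_S[OF a1 assms(3)] by (simp add: funion_commute kbip_sym)
  show "chain (S |\<union>| T) (kbip S T) {} m"
    using m cS cT chain_mono by (metis max_def)
qed

lemma wins_dom_T: "wins True (dom_pos V E col D) = (\<exists>v. v |\<in>| V \<and> alice_may (col v) \<and> playable V E D v
   \<and> \<not> wins False (dom_pos V E col (D \<union> {u. u |\<in>| V \<and> dominates E v u})))"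
  apply (simp only: dom_pos.simps[of V E col D] wins.simps)
  apply (simp add: fimage.rep_eq ffilter.rep_eq)
  by blast

lemma wins_dom_F: "wins False (dom_pos V E col D) = (\<exists>v. v |\<in>| V \<and> bob_may (col v) \<and> playable V E D v
   \<and> \<not> wins True (dom_pos V E col (D \<union> {u. u |\<in>| V \<and> dominates E v u})))"
  apply (simp only: dom_pos.simps[of V E col D] wins.simps)
  apply (simp add: fimage.rep_eq ffilter.rep_eq)
  by blast

lemma dom_terminal_T: "fset V \<subseteq> D \<Longrightarrow> \<not> wins True (dom_pos V E col D)"
  by (subst wins_dom_T, unfold playable_def, blast)

lemma dom_terminal_F: "fset V \<subseteq> D \<Longrightarrow> \<not> wins False (dom_pos V E col D)"
  by (subst wins_dom_F, unfold playable_def, blast)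

lemma spw_dom:
  assumes HA: "\<And>v. v |\<in>| V \<Longrightarrow> alice_may (col v) \<Longrightarrow> \<exists>w. bob_may (col w) \<and>
      playable V E ({} \<union> {u. u |\<in>| V \<and> dominates E v u}) w \<and>
      fset V \<subseteq> {} \<union> {u. u |\<in>| V \<and> dominates E v u} \<union> {u. u |\<in>| V \<and> dominates E w u}"
  and HB: "\<And>v. v |\<in>| V \<Longrightarrow> bob_may (col v) \<Longrightarrow> \<exists>w. alice_may (col w) \<and>
      playable V E ({} \<union> {u. u |\<in>| V \<and> dominates E v u}) w \<and>
      fset V \<subseteq> {} \<union> {u. u |\<in>| V \<and> dominates E v u} \<union> {u. u |\<in>| V \<and> dominates E w u}"
  shows "second_player_win (dom_pos V E col {})"
proof -
  have "\<not> wins True (dom_pos V E col {})"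
  proof (subst wins_dom_T, clarify)
    fix v assume v: "v |\<in>| V" "alice_may (col v)" "playable V E {} v"
      "\<not> wins False (dom_pos V E col ({} \<union> {u. u |\<in>| V \<and> dominates E v u}))"
    obtain w where w: "bob_may (col w)" "playable V E ({} \<union> {u. u |\<in>| V \<and> dominates E v u}) w"
      "fset V \<subseteq> {} \<union> {u. u |\<in>| V \<and> dominates E v u} \<union> {u. u |\<in>| V \<and> dominates E w u}"
      using HA[OF v(1,2)] by blast
    have "wins False (dom_pos V E col ({} \<union> {u. u |\<in>| V \<and> dominates E v u}))"
      apply (subst wins_dom_F)
      using w dom_terminal_T[OF w(3)] unfolding playable_def by blast
    thus False using v(4) by blast
  qed
  moreover have "\<not> wins False (dom_pos V E col {})"
  proof (subst wins_dom_F, clarify)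
    fix v assume v: "v |\<in>| V" "bob_may (col v)" "playable V E {} v"
      "\<not> wins True (dom_pos V E col ({} \<union> {u. u |\<in>| V \<and> dominates E v u}))"
    obtain w where w: "alice_may (col w)" "playable V E ({} \<union> {u. u |\<in>| V \<and> dominates E v u}) w"
      "fset V \<subseteq> {} \<union> {u. u |\<in>| V \<and> dominates E v u} \<union> {u. u |\<in>| V \<and> dominates E w u}"
      using HB[OF v(1,2)] by blast
    have "wins True (dom_pos V E col ({} \<union> {u. u |\<in>| V \<and> dominates E v u}))"
      apply (subst wins_dom_T)
      using w dom_terminal_F[OF w(3)] unfolding playable_def by blast
    thus False using v(4) by blast
  qed
  ultimately show ?thesis by (simp add: second_player_win_def)
qed

lemma respond_S:
  assumes "S |\<inter>| T = {||}" "fcard S \<ge> 2" "v |\<in>| S" "w |\<in>| T"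
  shows "playable (S |\<union>| T) (kbip S T) ({} \<union> {u. u |\<in>| S |\<union>| T \<and> dominates (kbip S T) v u}) w \<and>
      fset (S |\<union>| T) \<subseteq> {} \<union> {u. u |\<in>| S |\<union>| T \<and> dominates (kbip S T) v u}
        \<union> {u. u |\<in>| S |\<union>| T \<and> dominates (kbip S T) w u}"
proof -
  have a1: "T |\<inter>| S = {||}" using assms(1) by (simp add: finter_commute)
  have nv: "{u. u |\<in>| S |\<union>| T \<and> dominates (kbip S T) v u} = insert v (fset T)"
    using nbhd_S[OF assms(1,3)] .
  have nw: "{u. u |\<in>| S |\<union>| T \<and> dominates (kbip S T) w u} = insert w (fset S)"
    using nbhd_S[OF a1 assms(4)] by (simp add: funion_commute kbip_sym)
  have "card (fset S) \<ge> 2" using assms(2) by (simp add: fcard.rep_eq)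
  hence "\<not> fset S \<subseteq> {v}"
    by (metis card.empty card.insert empty_iff finite.intros(1) le_antisym nat.inject numeral_2_eq_2 subset_singletonD zero_neq_numeral card_mono finite_insert not_less_eq_eq)
  then obtain u where u: "u \<in> fset S" "u \<noteq> v" by blast
  have uT: "u \<notin> fset T"
  proof
    assume "u \<in> fset T"
    hence "u |\<in>| S |\<inter>| T" using u by simp
    thus False using assms(1) by simp
  qed
  have "playable (S |\<union>| T) (kbip S T) (insert v (fset T)) w"
    unfolding playable_def dominates_def kbip_def
    apply (rule conjI)
    using assms(4) apply simp
    apply (rule exI[of _ u])
    using u uT assms(4) by simp
  moreover have "fset (S |\<union>| T) \<subseteq> insert v (fset T) \<union> insert w (fset S)" by auto
  ultimately show ?thesis unfolding nv nw by simp
qed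

lemma neg_neg_nat: "neg (neg (nat_game m)) = nat_game m"
  by (induction m) auto

lemma add_zero: "add G (Game {||} {||}) = G"
proof (induction G)
  case (Game L R)
  then show ?case by (auto intro: fset.map_ident_strong)
qed

theorem theorem4:
  fixes S T :: "'v fset" and col :: "'v \<Rightarrow> color"
  assumes disj: "S |\<inter>| T = {||}"
    and s2: "fcard S \<ge> 2" and t2: "fcard T \<ge> 2"
  shows
    "((\<forall>v\<in>fset (S |\<union>| T). col v = ColA) \<longrightarrow>
        game_eq (dom_game (S |\<union>| T) (kbip S T) col) (int_game (int (max (fcard S) (fcard T)))))
   \<and> ((\<forall>v\<in>fset (S |\<union>| T). col v = ColB) \<longrightarrow>
        game_eq (dom_game (S |\<union>| T) (kbip S T) col) (int_game (- int (max (fcard S) (fcard T)))))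
   \<and> (((\<exists>v\<in>fset S. col v = ColC) \<or> ((\<exists>v\<in>fset S. col v = ColA) \<and> (\<exists>v\<in>fset S. col v = ColB)))
       \<and> ((\<exists>v\<in>fset T. col v = ColC) \<or> ((\<exists>v\<in>fset T. col v = ColA) \<and> (\<exists>v\<in>fset T. col v = ColB)))
       \<longrightarrow> game_eq (dom_game (S |\<union>| T) (kbip S T) col) (int_game 0))
   \<and> ((\<forall>v\<in>fset S. col v = ColA) \<and> (\<forall>v\<in>fset T. col v = ColB) \<longrightarrow>
        game_eq (dom_game (S |\<union>| T) (kbip S T) col) (int_game 0))
   \<and> ((\<forall>v\<in>fset S. col v = ColB) \<and> (\<forall>v\<in>fset T. col v = ColA) \<longrightarrow>
        game_eq (dom_game (S |\<union>| T) (kbip S T) col) (int_game 0))"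
proof -
  define V where "V = S |\<union>| T"
  define E where "E = kbip S T"
  have a1: "T |\<inter>| S = {||}" using disj by (simp add: finter_commute)
  have Sne: "S \<noteq> {||}" using s2 by (auto simp: fcard.rep_eq)
  have Tne: "T \<noteq> {||}" using t2 by (auto simp: fcard.rep_eq)
  have RS: "playable V E ({} \<union> {u. u |\<in>| V \<and> dominates E v u}) w \<and>
      fset V \<subseteq> {} \<union> {u. u |\<in>| V \<and> dominates E v u} \<union> {u. u |\<in>| V \<and> dominates E w u}"
    if "v |\<in>| S" "w |\<in>| T" for v w
    unfolding V_def E_def using respond_S[OF disj s2 that] .
  have RT: "playable V E ({} \<union> {u. u |\<in>| V \<and> dominates E v u}) w \<and>
      fset V \<subseteq> {} \<union> {u. u |\<in>| V \<and> dominates E v u} \<union> {u. u |\<in>| V \<and> dominates E w u}"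
    if "v |\<in>| T" "w |\<in>| S" for v w
    unfolding V_def E_def using respond_S[OF a1 t2 that] by (simp add: funion_commute kbip_sym)
  have G: "dom_game (S |\<union>| T) (kbip S T) col = dom_pos V E col {}"
    unfolding dom_game_def V_def E_def ..
  have CS: "chain V E {} k \<longleftrightarrow> k \<le> max (fcard S) (fcard T)" for k
    unfolding V_def E_def using chain_start[OF disj Sne Tne] .
  define m where "m = max (fcard S) (fcard T)"
  have m2: "m \<ge> 2" unfolding m_def using s2 by simp
  have P1: "(\<forall>v\<in>fset (S |\<union>| T). col v = ColA) \<longrightarrow>
        game_eq (dom_game (S |\<union>| T) (kbip S T) col) (int_game (int m))"
  proof
    assume A: "\<forall>v\<in>fset (S |\<union>| T). col v = ColA"
    hence A': "\<forall>v\<in>fset V. col v = ColA" unfolding V_def .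
    have i: "int_game (int m) = nat_game m" unfolding int_game_def by simp
    have W: "(\<forall>n. wins True (add (dom_pos V E col {}) (neg (nat_game n))) = lp (dom_pos V E col {}) (Suc n)) \<and>
         (\<forall>n. wins False (add (dom_pos V E col {}) (neg (nat_game n))) = (\<not> lp (dom_pos V E col {}) n))"
      using lonly_wins[OF lonly_dom[OF A']] .
    show "game_eq (dom_game (S |\<union>| T) (kbip S T) col) (int_game (int m))"
      unfolding game_eq_def second_player_win_def G i
      using W lp_dom[OF A', of E "{}"] CS[of m] CS[of "Suc m"] unfolding m_def by (simp del: lp.simps chain.simps)
  qed
  have P2: "(\<forall>v\<in>fset (S |\<union>| T). col v = ColB) \<longrightarrow>
        game_eq (dom_game (S |\<union>| T) (kbip S T) col) (int_game (- int m))"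
  proof
    assume A: "\<forall>v\<in>fset (S |\<union>| T). col v = ColB"
    hence A': "\<forall>v\<in>fset V. col v = ColB" unfolding V_def .
    have i: "neg (int_game (- int m)) = nat_game m" unfolding int_game_def using m2 by (simp add: neg_neg_nat)
    have W: "(\<forall>n. wins False (add (dom_pos V E col {}) (nat_game n)) = rp (dom_pos V E col {}) (Suc n)) \<and>
         (\<forall>n. wins True (add (dom_pos V E col {}) (nat_game n)) = (\<not> rp (dom_pos V E col {}) n))"
      using ronly_wins[OF ronly_dom[OF A']] .
    show "game_eq (dom_game (S |\<union>| T) (kbip S T) col) (int_game (- int m))"
      unfolding game_eq_def second_player_win_def G i
      using W rp_dom[OF A', of E "{}"] CS[of m] CS[of "Suc m"] unfolding m_def by (simp del: rp.simps chain.simps)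
  qed
  have Z: "game_eq (dom_game (S |\<union>| T) (kbip S T) col) (int_game 0) = second_player_win (dom_pos V E col {})"
    unfolding game_eq_def G int_game_def by (simp add: add_zero)
  have VST: "v |\<in>| V \<Longrightarrow> v |\<in>| S \<or> v |\<in>| T" for v unfolding V_def by simp
  have P3: "((\<exists>v\<in>fset S. col v = ColC) \<or> ((\<exists>v\<in>fset S. col v = ColA) \<and> (\<exists>v\<in>fset S. col v = ColB)))
       \<and> ((\<exists>v\<in>fset T. col v = ColC) \<or> ((\<exists>v\<in>fset T. col v = ColA) \<and> (\<exists>v\<in>fset T. col v = ColB)))
       \<longrightarrow> game_eq (dom_game (S |\<union>| T) (kbip S T) col) (int_game 0)"
  proof
    assume H: "((\<exists>v\<in>fset S. col v = ColC) \<or> ((\<exists>v\<in>fset S. col v = ColA) \<and> (\<exists>v\<in>fset S. col v = ColB)))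
       \<and> ((\<exists>v\<in>fset T. col v = ColC) \<or> ((\<exists>v\<in>fset T. col v = ColA) \<and> (\<exists>v\<in>fset T. col v = ColB)))"
    obtain sa where sa: "sa |\<in>| S" "alice_may (col sa)" using H unfolding alice_may_def by auto
    obtain sb where sb: "sb |\<in>| S" "bob_may (col sb)" using H unfolding bob_may_def by auto
    obtain ta where ta: "ta |\<in>| T" "alice_may (col ta)" using H unfolding alice_may_def by auto
    obtain tb where tb: "tb |\<in>| T" "bob_may (col tb)" using H unfolding bob_may_def by auto
    show "game_eq (dom_game (S |\<union>| T) (kbip S T) col) (int_game 0)"
      unfolding Z
    proof (rule spw_dom)
      fix v assume "v |\<in>| V" "alice_may (col v)"
      then consider "v |\<in>| S" | "v |\<in>| T" using VST by blast
      then show "\<exists>w. bob_may (col w) \<and>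
      playable V E ({} \<union> {u. u |\<in>| V \<and> dominates E v u}) w \<and>
      fset V \<subseteq> {} \<union> {u. u |\<in>| V \<and> dominates E v u} \<union> {u. u |\<in>| V \<and> dominates E w u}"
        by cases (use RS[OF _ tb(1)] RT[OF _ sb(1)] tb sb in blast)+
    next
      fix v assume "v |\<in>| V" "bob_may (col v)"
      then consider "v |\<in>| S" | "v |\<in>| T" using VST by blast
      then show "\<exists>w. alice_may (col w) \<and>
      playable V E ({} \<union> {u. u |\<in>| V \<and> dominates E v u}) w \<and>
      fset V \<subseteq> {} \<union> {u. u |\<in>| V \<and> dominates E v u} \<union> {u. u |\<in>| V \<and> dominates E w u}"
        by cases (use RS[OF _ ta(1)] RT[OF _ sa(1)] ta sa in blast)+
    qed
  qed
  obtain s0 where s0: "s0 |\<in>| S" using Sne by auto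
  obtain t0 where t0: "t0 |\<in>| T" using Tne by auto
  have P4: "(\<forall>v\<in>fset S. col v = ColA) \<and> (\<forall>v\<in>fset T. col v = ColB) \<longrightarrow>
        game_eq (dom_game (S |\<union>| T) (kbip S T) col) (int_game 0)"
  proof
    assume H: "(\<forall>v\<in>fset S. col v = ColA) \<and> (\<forall>v\<in>fset T. col v = ColB)"
    show "game_eq (dom_game (S |\<union>| T) (kbip S T) col) (int_game 0)"
      unfolding Z
    proof (rule spw_dom)
      fix v assume v: "v |\<in>| V" "alice_may (col v)"
      hence vS: "v |\<in>| S" using VST H unfolding alice_may_def by force
      show "\<exists>w. bob_may (col w) \<and>
      playable V E ({} \<union> {u. u |\<in>| V \<and> dominates E v u}) w \<and>
      fset V \<subseteq> {} \<union> {u. u |\<in>| V \<and> dominates E v u} \<union> {u. u |\<in>| V \<and> dominates E w u}"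
        using RS[OF vS t0] H t0 unfolding bob_may_def by auto
    next
      fix v assume v: "v |\<in>| V" "bob_may (col v)"
      hence vT: "v |\<in>| T" using VST H unfolding bob_may_def by force
      show "\<exists>w. alice_may (col w) \<and>
      playable V E ({} \<union> {u. u |\<in>| V \<and> dominates E v u}) w \<and>
      fset V \<subseteq> {} \<union> {u. u |\<in>| V \<and> dominates E v u} \<union> {u. u |\<in>| V \<and> dominates E w u}"
        using RT[OF vT s0] H s0 unfolding alice_may_def by auto
    qed
  qed
  have P5: "(\<forall>v\<in>fset S. col v = ColB) \<and> (\<forall>v\<in>fset T. col v = ColA) \<longrightarrow>
        game_eq (dom_game (S |\<union>| T) (kbip S T) col) (int_game 0)"
  proof
    assume H: "(\<forall>v\<in>fset S. col v = ColB) \<and> (\<forall>v\<in>fset T. col v = ColA)"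
    show "game_eq (dom_game (S |\<union>| T) (kbip S T) col) (int_game 0)"
      unfolding Z
    proof (rule spw_dom)
      fix v assume v: "v |\<in>| V" "alice_may (col v)"
      hence vT: "v |\<in>| T" using VST H unfolding alice_may_def by force
      show "\<exists>w. bob_may (col w) \<and>
      playable V E ({} \<union> {u. u |\<in>| V \<and> dominates E v u}) w \<and>
      fset V \<subseteq> {} \<union> {u. u |\<in>| V \<and> dominates E v u} \<union> {u. u |\<in>| V \<and> dominates E w u}"
        using RT[OF vT s0] H s0 unfolding bob_may_def by auto
    next
      fix v assume v: "v |\<in>| V" "bob_may (col v)"
      hence vS: "v |\<in>| S" using VST H unfolding bob_may_def by force
      show "\<exists>w. alice_may (col w) \<and>
      playable V E ({} \<union> {u. u |\<in>| V \<and> dominates E v u}) w \<and>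
      fset V \<subseteq> {} \<union> {u. u |\<in>| V \<and> dominates E v u} \<union> {u. u |\<in>| V \<and> dominates E w u}"
        using RS[OF vS t0] H t0 unfolding alice_may_def by auto
    qed
  qed
  show ?thesis using P1 P2 P3 P4 P5 unfolding m_def by blast
qed

end
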